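(* Let $k$ be a positive integer, $q=2^k$, $F(X)=X^{q^2-q+1}$, $T_k(Y)=\sum_{i=0}^{k-1}Y^{2^i}$ and $f_{k,q+1}(Y)=\dfrac{T_k(Y)^{q+1}}{Y^{q}}$ (a polynomial in $\mathbb{F}_2[Y]$). Then, in $\mathbb{F}_2[X]$, $$F(X)+F(X+1)+1=f_{k,q+1}(X+X^2).$$
   Context: $f_{k,2^k+1}$ is the Müller–Cohen–Matthews polynomial; it is a polynomial because $Y$ divides $T_k(Y)$. *)

theory Defs
  imports "HOL-Library.Z2" "HOL-Computational_Algebra.Polynomial"
begin

text \<open>Polynomials over F_2 = the field type bit. X is the indeterminate [:0,1:].\<close>

definition T_poly :: "nat \<Rightarrow> bit poly" where
  "T_poly k = (\<Sum>i<k. monom 1 (2 ^ i))"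

text \<open>Mueller-Cohen-Matthews polynomial f_{k,q+1}(Y) = T_k(Y)^(q+1) / Y^q with q = 2^k;
  the division is exact (Y divides T_k).\<close>
definition f_MCM :: "nat \<Rightarrow> bit poly" where
  "f_MCM k = (T_poly k ^ (2 ^ k + 1)) div (monom 1 (2 ^ k))"

definition F_poly :: "nat \<Rightarrow> bit poly" where
  "F_poly k = monom 1 ((2 ^ k)\<^sup>2 - 2 ^ k + 1)"

end

theory Submission
  imports Defs
begin

lemma add_self_bp: "(a::bit poly) + a = 0"
proof -
  have "\<And>n. coeff (a + a) n = 0"
  proof -
    fix n
    show "coeff (a + a) n = 0"
      by (simp only: coeff_add) (cases "coeff a n"; simp)
  qed
  then show ?thesis by (simp add: poly_eq_iff)
qed

lemma frob2: "((a::bit poly) + b)^2 = a^2 + b^2"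
proof -
  have "(a+b)^2 = a^2 + b^2 + (a*b + a*b)" by (simp add: power2_eq_square algebra_simps)
  then show ?thesis by (simp add: add_self_bp)
qed

lemma frob: "((a::bit poly) + b)^(2^i) = a^(2^i) + b^(2^i)"
proof (induction i)
  case 0 then show ?case by simp
next
  case (Suc i)
  have "(a+b)^(2^Suc i) = ((a+b)^(2^i))^2" by (simp add: power_mult[symmetric] mult.commute)
  also have "\<dots> = (a^(2^i))^2 + (b^(2^i))^2" using Suc by (simp add: frob2)
  also have "\<dots> = a^(2^Suc i) + b^(2^Suc i)" by (simp add: power_mult[symmetric] mult.commute)
  finally show ?case .
qed

lemma pcompose_power: "pcompose (p ^ n) r = (pcompose p r) ^ n"
  by (induction n) (simp_all add: pcompose_1 pcompose_mult)

lemma pcompose_x: "pcompose [:0,1:] (r::bit poly) = r"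
  by (simp add: pcompose_pCons smult_1_left)

lemma monom_x: "monom (1::bit) n = [:0,1:]^n"
  by (simp add: monom_altdef)

lemma T_comp: "pcompose (T_poly k) ([:0,1,1:]) = [:0,1:] + [:0,1:]^(2^k)"
proof (induction k)
  case 0 then show ?case by (simp add: T_poly_def add_self_bp)
next
  case (Suc k)
  let ?x = "[:0,1:] :: bit poly"
  have Y: "[:0,1,1:] = ?x + ?x^2"
    by (simp add: power2_eq_square)
  have "pcompose (T_poly (Suc k)) [:0,1,1:] = pcompose (T_poly k) [:0,1,1:] + [:0,1,1:]^(2^k)"
    by (simp add: T_poly_def pcompose_add monom_x pcompose_power pcompose_x)
  also have "\<dots> = ?x + ?x^(2^k) + (?x^(2^k) + ?x^(2^Suc k))"
    using Suc by (simp add: Y frob power_mult[symmetric] mult.commute)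
  also have "\<dots> = ?x + ?x^(2^Suc k) + (?x^(2^k) + ?x^(2^k))"
    by (simp add: algebra_simps)
  finally show ?case by (simp add: add_self_bp)
qed

lemma x_dvd_T: "[:0,1:] dvd T_poly k"
  unfolding T_poly_def monom_x
  by (intro dvd_sum) (simp add: dvd_power)

lemma expand_aux: "((x::'a::comm_ring_1)^m + u^m + 1) * (x^q*u^q)
   = x^(m+q) * u^q + x^q * u^(m+q) + x^q * u^q"
  by (simp add: power_add algebra_simps)

theorem mainTheorem4:
  fixes k :: nat
  assumes "k > 0"
  shows "F_poly k + pcompose (F_poly k) [:1, 1:] + 1
           = pcompose (f_MCM k) [:0, 1, 1:]"
proof -
  let ?x = "[:0,1:] :: bit poly"
  define q :: nat where "q = 2^k"
  define m where "m = q^2 - q + 1"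
  define Y where "Y = ?x * (1 + ?x)"
  have x1: "[:1,1:] = 1 + ?x" 
    by (simp only: one_pCons add_pCons add_0_right add_0_left pCons_0_0)
  have Yeq: "[:0,1,1:] = Y" unfolding Y_def x1[symmetric] by simp
  have Ynz: "Y \<noteq> 0" unfolding Y_def x1[symmetric] by simp
  have dv: "?x^q dvd T_poly k ^ (q+1)"
  proof -
    have "?x^q dvd T_poly k ^ q" using x_dvd_T by (simp add: dvd_power_same)
    then show ?thesis by (simp add: dvd_mult2)
  qed
  have fm: "f_MCM k * ?x^q = T_poly k ^ (q+1)"
    unfolding f_MCM_def monom_x q_def[symmetric] using dv by simp
  have key: "pcompose (f_MCM k) Y * Y^q = (?x + ?x^q)^(q+1)"
  proof -
    have h: "pcompose (f_MCM k * ?x^q) Y = pcompose (T_poly k ^ (q+1)) Y" using fm by simp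
    have Tc: "pcompose (T_poly k) Y = ?x + ?x^q" using T_comp[of k] Yeq q_def by simp
    show ?thesis using h by (simp only: pcompose_mult pcompose_power pcompose_x Tc)
  qed
  define a where "a = ?x^q"
  define b where "b = ?x^(q^2)"
  have fr: "(1 + ?x)^q = 1 + a" unfolding q_def a_def using frob[of 1 ?x k] by simp
  have fr2: "(1 + ?x)^(q^2) = 1 + b" unfolding q_def b_def using frob[of 1 ?x "2*k"]
    by (simp add: power_mult[symmetric] power_mult_distrib mult.commute)
  have frq: "(?x + a)^q = a + b" unfolding q_def a_def b_def using frob[of ?x "?x^(2^k)" k]
    by (simp add: power_mult[symmetric] power2_eq_square)
  have qle: "q \<le> q^2" by (simp add: power2_eq_square)
  have mq: "m + q = q^2 + 1" unfolding m_def using qle by simp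
  have LHS: "(?x^m + (1+?x)^m + 1) * Y^q = (?x+a)^(q+1)"
  proof -
    have "(?x^m + (1+?x)^m + 1) * Y^q
        = ?x^(m+q) * (1+?x)^q + ?x^q * (1+?x)^(m+q) + ?x^q * (1+?x)^q"
      unfolding Y_def power_mult_distrib by (rule expand_aux)
    also have "\<dots> = b * ?x * (1+a) + a * ((1+b)*(1+?x)) + a*(1+a)"
      by (simp add: mq power_add fr fr2 a_def b_def)
    also have "\<dots> = (a + b) * (?x + a) + ((a*b*?x + a*b*?x) + (a + a))"
      by (simp add: algebra_simps)
    also have "\<dots> = (a + b) * (?x + a)" by (simp add: add_self_bp)
    also have "\<dots> = (?x+a)^(q+1)" by (simp add: frq)
    finally show ?thesis .
  qed
  have "F_poly k + pcompose (F_poly k) [:1, 1:] + 1 = ?x^m + (1+?x)^m + 1"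
    unfolding F_poly_def monom_x pcompose_power x1 pcompose_x m_def q_def by (rule refl)
  moreover have "(?x^m + (1+?x)^m + 1) = pcompose (f_MCM k) Y"
  proof -
    have "(?x^m + (1+?x)^m + 1) * Y^q = pcompose (f_MCM k) Y * Y^q"
      using LHS key unfolding a_def by simp
    then show ?thesis using Ynz by (metis mult_right_cancel power_not_zero)
  qed
  ultimately show ?thesis by (simp add: Yeq)
qed

end
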